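(* (Kleene proof principle) Let $\mathscr{S}$ be an expressivity situation and $x\colon X\to BX$ a $B$-coalgebra. Assume the chain $\top\sqsupseteq(x^*\circ\overline{B}^{\underline{\Omega},\tau})(\top)\sqsupseteq(x^*\circ\overline{B}^{\underline{\Omega},\tau})^2(\top)\sqsupseteq\cdots$ in $\mathcal{E}_X$ stabilizes after $\omega$ steps, i.e. $\bigwedge_{i<\omega}(x^*\circ\overline{B}^{\underline{\Omega},\tau})^i(\top)$ is a fixed point of $x^*\circ\overline{B}^{\underline{\Omega},\tau}$. If for each $i\in\mathbb{N}$ the set $\{[\![\varphi]\!]_x\mid\varphi\in L_{\mathscr{S}},\ \mathrm{depth}(\varphi)\le i\}\subseteq\mathcal{C}(X,\Omega)$ is an approximating family, then $\mathscr{S}$ is expressive for $x$, i.e. $\nu\bigl(x^*\circ\overline{B}^{\underline{\Omega},\tau}\bigr)\sqsupseteq\bigwedge_{\varphi\in L_{\mathscr{S}}}[\![\varphi]\!]_x^{*}\underline{\Omega}$.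
   Context: An expressivity situation $\mathscr{S}=(p,B,\Omega,\underline{\Omega},\Sigma,\Lambda,(f_\sigma),(\tau_\lambda))$ consists of: a fibration $p\colon\mathcal{E}\to\mathcal{C}$ whose fibers $\mathcal{E}_X$ are complete lattices (order $\sqsubseteq$, meets $\bigwedge$, top $\top$) with meet-preserving reindexing $f^*$; a functor $B\colon\mathcal{C}\to\mathcal{C}$; $\Omega\in\mathcal{C}$ with finite powers and $\underline{\Omega}\in\mathcal{E}$ above $\Omega$; a ranked alphabet $\Sigma$ with arrows $f_\sigma\colon\Omega^{\mathrm{rank}(\sigma)}\to\Omega$ each lifting to some $g_\sigma\colon\underline{\Omega}^{\mathrm{rank}(\sigma)}\to\underline{\Omega}$ with $pg_\sigma=f_\sigma$; a set $\Lambda$ and arrows $\tau_\lambda\colon B\Omega\to\Omega$. Formulas of $L_{\mathscr{S}}$: $\varphi::=\sigma(\varphi_1,\dots,\varphi_{\mathrm{rank}(\sigma)})\mid\heartsuit_\lambda\varphi$, with semantics $[\![\sigma(\varphi_1,\dots)]\!]_x=f_\sigma\circ\langle[\![\varphi_1]\!]_x,\dots\rangle$, $[\![\heartsuit_\lambda\varphi]\!]_x=\tau_\lambda\circ B[\![\varphi]\!]_x\circ x$; depth is defined by $\mathrm{depth}(\sigma(\varphi_1,\dots))=\max_j\mathrm{depth}(\varphi_j)$ (0 for constants) and $\mathrm{depth}(\heartsuit_\lambda\varphi)=\mathrm{depth}(\varphi)+1$. Codensity lifting: $\overline{B}^{\underline{\Omega},\tau}P=\bigwedge_{\lambda\in\Lambda,\,h\in\mathcal{E}(P,\underline{\Omega})}(\tau_\lambda\circ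 B(ph))^*\underline{\Omega}$; codensity bisimilarity is its greatest fixed point $\nu(x^*\circ\overline{B}^{\underline{\Omega},\tau})$ in $\mathcal{E}_X$. A subset $S\subseteq\mathcal{C}(X,\Omega)$ is an approximating family if for every $\mathcal{E}$-arrow $h\colon\bigwedge_{k\in S}k^*\underline{\Omega}\to\underline{\Omega}$ and every $\lambda\in\Lambda$, $\bigwedge_{k'\in S,\lambda'\in\Lambda}(\tau_{\lambda'}\circ Bk')^*\underline{\Omega}\sqsubseteq(\tau_\lambda\circ B(ph))^*\underline{\Omega}$. *)

theory Defs
  imports Main
begin

record ('o,'a) cat =
  Obj :: "'o set"
  Arr :: "'a set"
  Dom :: "'a \<Rightarrow> 'o"
  Cod :: "'a \<Rightarrow> 'o"
  Cmp :: "'a \<Rightarrow> 'a \<Rightarrow> 'a"   (* Cmp C g f = g \<circ> f *)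
  Idt :: "'o \<Rightarrow> 'a"

definition hom :: "('o,'a) cat \<Rightarrow> 'o \<Rightarrow> 'o \<Rightarrow> 'a set" where
  "hom C X Y = {f \<in> Arr C. Dom C f = X \<and> Cod C f = Y}"

definition category :: "('o,'a) cat \<Rightarrow> bool" where
  "category C \<longleftrightarrow>
     (\<forall>f\<in>Arr C. Dom C f \<in> Obj C \<and> Cod C f \<in> Obj C) \<and>
     (\<forall>X\<in>Obj C. Idt C X \<in> hom C X X) \<and>
     (\<forall>f g. f \<in> Arr C \<and> g \<in> Arr C \<and> Cod C f = Dom C g \<longrightarrow>
        Cmp C g f \<in> hom C (Dom C f) (Cod C g)) \<and>
     (\<forall>f\<in>Arr C. Cmp C f (Idt C (Dom C f)) = f \<and> Cmp C (Idt C (Cod C f)) f = f) \<and>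
     (\<forall>f g h. f \<in> Arr C \<and> g \<in> Arr C \<and> h \<in> Arr C \<and> Cod C f = Dom C g \<and> Cod C g = Dom C h
        \<longrightarrow> Cmp C h (Cmp C g f) = Cmp C (Cmp C h g) f)"

definition is_functor :: "('o,'a) cat \<Rightarrow> ('p,'b) cat \<Rightarrow> ('o \<Rightarrow> 'p) \<Rightarrow> ('a \<Rightarrow> 'b) \<Rightarrow> bool" where
  "is_functor C D Fo Fa \<longleftrightarrow>
     (\<forall>X\<in>Obj C. Fo X \<in> Obj D) \<and>
     (\<forall>f\<in>Arr C. Fa f \<in> hom D (Fo (Dom C f)) (Fo (Cod C f))) \<and>
     (\<forall>X\<in>Obj C. Fa (Idt C X) = Idt D (Fo X)) \<and>
     (\<forall>f g. f \<in> Arr C \<and> g \<in> Arr C \<and> Cod C f = Dom C g \<longrightarrow> Fa (Cmp C g f) = Cmp D (Fa g) (Fa f))"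

record ('o,'a,'eo,'ea) fibr =
  base :: "('o,'a) cat"
  tot  :: "('eo,'ea) cat"
  po   :: "'eo \<Rightarrow> 'o"
  pa   :: "'ea \<Rightarrow> 'a"

definition cartesian :: "('o,'a,'eo,'ea) fibr \<Rightarrow> 'ea \<Rightarrow> bool" where
  "cartesian F c \<longleftrightarrow> c \<in> Arr (tot F) \<and>
     (\<forall>g\<in>Arr (tot F). \<forall>u\<in>Arr (base F).
        Cod (tot F) g = Cod (tot F) c \<and> Cod (base F) u = Dom (base F) (pa F c) \<and>
        Dom (base F) u = Dom (base F) (pa F g) \<and> pa F g = Cmp (base F) (pa F c) u
        \<longrightarrow> (\<exists>!h. h \<in> Arr (tot F) \<and> Dom (tot F) h = Dom (tot F) g \<and> Cod (tot F) h = Dom (tot F) c \<and>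
                  pa F h = u \<and> Cmp (tot F) c h = g))"

definition fibration :: "('o,'a,'eo,'ea) fibr \<Rightarrow> bool" where
  "fibration F \<longleftrightarrow> category (base F) \<and> category (tot F) \<and> is_functor (tot F) (base F) (po F) (pa F) \<and>
     (\<forall>Q\<in>Obj (tot F). \<forall>u\<in>Arr (base F). Cod (base F) u = po F Q \<longrightarrow>
        (\<exists>c. cartesian F c \<and> Cod (tot F) c = Q \<and> pa F c = u))"

definition fibre :: "('o,'a,'eo,'ea) fibr \<Rightarrow> 'o \<Rightarrow> 'eo set" where
  "fibre F X = {P \<in> Obj (tot F). po F P = X}"

definition fle :: "('o,'a,'eo,'ea) fibr \<Rightarrow> 'o \<Rightarrow> 'eo \<Rightarrow> 'eo \<Rightarrow> bool" where
  "fle F X P Q \<longleftrightarrow> P \<in> fibre F X \<and> Q \<in> fibre F X \<and>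
     (\<exists>h\<in>Arr (tot F). Dom (tot F) h = P \<and> Cod (tot F) h = Q \<and> pa F h = Idt (base F) X)"

definition is_fmeet :: "('o,'a,'eo,'ea) fibr \<Rightarrow> 'o \<Rightarrow> 'eo set \<Rightarrow> 'eo \<Rightarrow> bool" where
  "is_fmeet F X S m \<longleftrightarrow> m \<in> fibre F X \<and> (\<forall>Q\<in>S. fle F X m Q) \<and>
     (\<forall>m'\<in>fibre F X. (\<forall>Q\<in>S. fle F X m' Q) \<longrightarrow> fle F X m' m)"

definition fmeet :: "('o,'a,'eo,'ea) fibr \<Rightarrow> 'o \<Rightarrow> 'eo set \<Rightarrow> 'eo" where
  "fmeet F X S = (THE m. is_fmeet F X S m)"

definition ftop :: "('o,'a,'eo,'ea) fibr \<Rightarrow> 'o \<Rightarrow> 'eo" where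
  "ftop F X = fmeet F X {}"

definition clat_fibres :: "('o,'a,'eo,'ea) fibr \<Rightarrow> bool" where
  "clat_fibres F \<longleftrightarrow> (\<forall>X\<in>Obj (base F).
     (\<forall>P Q. fle F X P Q \<and> fle F X Q P \<longrightarrow> P = Q) \<and>
     (\<forall>h h'. h \<in> Arr (tot F) \<and> h' \<in> Arr (tot F) \<and> pa F h = Idt (base F) X \<and> pa F h' = Idt (base F) X \<and>
        Dom (tot F) h = Dom (tot F) h' \<and> Cod (tot F) h = Cod (tot F) h' \<longrightarrow> h = h') \<and>
     (\<forall>S. S \<subseteq> fibre F X \<longrightarrow> (\<exists>m. is_fmeet F X S m)))"

definition reindex :: "('o,'a,'eo,'ea) fibr \<Rightarrow> 'a \<Rightarrow> 'eo \<Rightarrow> 'eo" where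
  "reindex F u Q = (THE P. \<exists>c. cartesian F c \<and> Cod (tot F) c = Q \<and> pa F c = u \<and> Dom (tot F) c = P)"

definition meet_preserving_reindex :: "('o,'a,'eo,'ea) fibr \<Rightarrow> bool" where
  "meet_preserving_reindex F \<longleftrightarrow> (\<forall>u\<in>Arr (base F). \<forall>S. S \<subseteq> fibre F (Cod (base F) u) \<longrightarrow>
     reindex F u (fmeet F (Cod (base F) u) S) = fmeet F (Dom (base F) u) (reindex F u ` S))"

definition is_power :: "('o,'a) cat \<Rightarrow> 'o \<Rightarrow> nat \<Rightarrow> 'o \<Rightarrow> (nat \<Rightarrow> 'a) \<Rightarrow> bool" where
  "is_power C Om n Pn prj \<longleftrightarrow> Pn \<in> Obj C \<and> (\<forall>i<n. prj i \<in> hom C Pn Om) \<and>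
     (\<forall>X\<in>Obj C. \<forall>ks. (\<forall>i<n. ks i \<in> hom C X Om) \<longrightarrow>
        (\<exists>!h. h \<in> hom C X Pn \<and> (\<forall>i<n. Cmp C (prj i) h = ks i)))"

definition tuple :: "('o,'a) cat \<Rightarrow> 'o \<Rightarrow> (nat \<Rightarrow> 'a) \<Rightarrow> nat \<Rightarrow> 'o \<Rightarrow> (nat \<Rightarrow> 'a) \<Rightarrow> 'a" where
  "tuple C Pn prj n X ks = (THE h. h \<in> hom C X Pn \<and> (\<forall>i<n. Cmp C (prj i) h = ks i))"

record ('o,'a,'eo,'ea,'s,'l) situation =
  fb   :: "('o,'a,'eo,'ea) fibr"
  Bo   :: "'o \<Rightarrow> 'o"
  Ba   :: "'a \<Rightarrow> 'a"
  Om   :: "'o"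
  Omu  :: "'eo"
  opow :: "nat \<Rightarrow> 'o"
  prj  :: "nat \<Rightarrow> nat \<Rightarrow> 'a"
  Sig  :: "'s set"
  rank :: "'s \<Rightarrow> nat"
  fsig :: "'s \<Rightarrow> 'a"
  Lam  :: "'l set"
  tau  :: "'l \<Rightarrow> 'a"

definition OmuPow :: "('o,'a,'eo,'ea,'s,'l) situation \<Rightarrow> nat \<Rightarrow> 'eo" where
  "OmuPow S n = fmeet (fb S) (opow S n) ((\<lambda>i. reindex (fb S) (prj S n i) (Omu S)) ` {..<n})"

definition expressivity_situation :: "('o,'a,'eo,'ea,'s,'l) situation \<Rightarrow> bool" where
  "expressivity_situation S \<longleftrightarrow>
     fibration (fb S) \<and> clat_fibres (fb S) \<and> meet_preserving_reindex (fb S) \<and>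
     is_functor (base (fb S)) (base (fb S)) (Bo S) (Ba S) \<and>
     Om S \<in> Obj (base (fb S)) \<and> Omu S \<in> Obj (tot (fb S)) \<and> po (fb S) (Omu S) = Om S \<and>
     (\<forall>n. is_power (base (fb S)) (Om S) n (opow S n) (prj S n)) \<and>
     (\<forall>\<sigma>\<in>Sig S. fsig S \<sigma> \<in> hom (base (fb S)) (opow S (rank S \<sigma>)) (Om S) \<and>
        (\<exists>g\<in>Arr (tot (fb S)). Dom (tot (fb S)) g = OmuPow S (rank S \<sigma>) \<and>
            Cod (tot (fb S)) g = Omu S \<and> pa (fb S) g = fsig S \<sigma>)) \<and>
     (\<forall>l\<in>Lam S. tau S l \<in> hom (base (fb S)) (Bo S (Om S)) (Om S))"

datatype ('s,'l) form = Op 's "('s,'l) form list" | Mod 'l "('s,'l) form"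

fun wf_form :: "('o,'a,'eo,'ea,'s,'l) situation \<Rightarrow> ('s,'l) form \<Rightarrow> bool" where
  "wf_form S (Op s fs) = (s \<in> Sig S \<and> length fs = rank S s \<and> (\<forall>f\<in>set fs. wf_form S f))"
| "wf_form S (Mod l f) = (l \<in> Lam S \<and> wf_form S f)"

fun depth :: "('s,'l) form \<Rightarrow> nat" where
  "depth (Op s fs) = foldr max (map depth fs) 0"
| "depth (Mod l f) = Suc (depth f)"

fun sem :: "('o,'a,'eo,'ea,'s,'l) situation \<Rightarrow> 'a \<Rightarrow> ('s,'l) form \<Rightarrow> 'a" where
  "sem S x (Op s fs) = Cmp (base (fb S)) (fsig S s)
      (tuple (base (fb S)) (opow S (rank S s)) (prj S (rank S s)) (rank S s)
         (Dom (base (fb S)) x) (\<lambda>i. map (sem S x) fs ! i))"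
| "sem S x (Mod l f) = Cmp (base (fb S)) (tau S l) (Cmp (base (fb S)) (Ba S (sem S x f)) x)"

definition codensity_lifting :: "('o,'a,'eo,'ea,'s,'l) situation \<Rightarrow> 'eo \<Rightarrow> 'eo" where
  "codensity_lifting S P = fmeet (fb S) (Bo S (po (fb S) P))
     {reindex (fb S) (Cmp (base (fb S)) (tau S l) (Ba S (pa (fb S) h))) (Omu S) | l h.
        l \<in> Lam S \<and> h \<in> Arr (tot (fb S)) \<and> Dom (tot (fb S)) h = P \<and> Cod (tot (fb S)) h = Omu S}"

definition Phi :: "('o,'a,'eo,'ea,'s,'l) situation \<Rightarrow> 'a \<Rightarrow> 'eo \<Rightarrow> 'eo" where
  "Phi S x P = reindex (fb S) x (codensity_lifting S P)"

definition codensity_bisim :: "('o,'a,'eo,'ea,'s,'l) situation \<Rightarrow> 'o \<Rightarrow> 'a \<Rightarrow> 'eo" where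
  "codensity_bisim S X x = (THE P. P \<in> fibre (fb S) X \<and> Phi S x P = P \<and>
     (\<forall>Q\<in>fibre (fb S) X. Phi S x Q = Q \<longrightarrow> fle (fb S) X Q P))"

definition approximating :: "('o,'a,'eo,'ea,'s,'l) situation \<Rightarrow> 'o \<Rightarrow> 'a set \<Rightarrow> bool" where
  "approximating S X K \<longleftrightarrow> K \<subseteq> hom (base (fb S)) X (Om S) \<and>
     (\<forall>h\<in>Arr (tot (fb S)).
        Dom (tot (fb S)) h = fmeet (fb S) X ((\<lambda>k. reindex (fb S) k (Omu S)) ` K) \<and>
        Cod (tot (fb S)) h = Omu S \<longrightarrow>
        (\<forall>l\<in>Lam S. fle (fb S) (Bo S X)
           (fmeet (fb S) (Bo S X)
              {reindex (fb S) (Cmp (base (fb S)) (tau S l') (Ba S k')) (Omu S) | k' l'. k' \<in> K \<and> l' \<in> Lam S})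
           (reindex (fb S) (Cmp (base (fb S)) (tau S l) (Ba S (pa (fb S) h))) (Omu S))))"

end

theory Submission
  imports Defs
begin

lemma cat_dom: "category C \<Longrightarrow> f \<in> Arr C \<Longrightarrow> Dom C f \<in> Obj C"
  unfolding category_def by blast
lemma cat_cod: "category C \<Longrightarrow> f \<in> Arr C \<Longrightarrow> Cod C f \<in> Obj C"
  unfolding category_def by blast
lemma cat_id: "category C \<Longrightarrow> X \<in> Obj C \<Longrightarrow> Idt C X \<in> Arr C \<and> Dom C (Idt C X) = X \<and> Cod C (Idt C X) = X"
  unfolding category_def hom_def by blast
lemma cat_comp: "category C \<Longrightarrow> f \<in> Arr C \<Longrightarrow> g \<in> Arr C \<Longrightarrow> Cod C f = Dom C g \<Longrightarrow>
   Cmp C g f \<in> Arr C \<and> Dom C (Cmp C g f) = Dom C f \<and> Cod C (Cmp C g f) = Cod C g"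
  unfolding category_def hom_def by blast
lemma cat_idr: "category C \<Longrightarrow> f \<in> Arr C \<Longrightarrow> Cmp C f (Idt C (Dom C f)) = f"
  unfolding category_def by blast
lemma cat_idl: "category C \<Longrightarrow> f \<in> Arr C \<Longrightarrow> Cmp C (Idt C (Cod C f)) f = f"
  unfolding category_def by blast
lemma cat_assoc: "category C \<Longrightarrow> f \<in> Arr C \<Longrightarrow> g \<in> Arr C \<Longrightarrow> h \<in> Arr C \<Longrightarrow> Cod C f = Dom C g \<Longrightarrow> Cod C g = Dom C h
   \<Longrightarrow> Cmp C h (Cmp C g f) = Cmp C (Cmp C h g) f"
  unfolding category_def by blast

lemma fun_obj: "is_functor C D Fo Fa \<Longrightarrow> X \<in> Obj C \<Longrightarrow> Fo X \<in> Obj D"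
  unfolding is_functor_def by blast
lemma fun_arr: "is_functor C D Fo Fa \<Longrightarrow> f \<in> Arr C \<Longrightarrow> Fa f \<in> Arr D \<and> Dom D (Fa f) = Fo (Dom C f) \<and> Cod D (Fa f) = Fo (Cod C f)"
  unfolding is_functor_def hom_def by blast
lemma fun_id: "is_functor C D Fo Fa \<Longrightarrow> X \<in> Obj C \<Longrightarrow> Fa (Idt C X) = Idt D (Fo X)"
  unfolding is_functor_def by blast
lemma fun_comp: "is_functor C D Fo Fa \<Longrightarrow> f \<in> Arr C \<Longrightarrow> g \<in> Arr C \<Longrightarrow> Cod C f = Dom C g \<Longrightarrow> Fa (Cmp C g f) = Cmp D (Fa g) (Fa f)"
  unfolding is_functor_def by blast

locale fib =
  fixes F :: "('o,'a,'eo,'ea) fibr"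
  assumes fib: "fibration F" and cl: "clat_fibres F" and mp: "meet_preserving_reindex F"
begin

lemma catB: "category (base F)" using fib unfolding fibration_def by blast
lemma catE: "category (tot F)" using fib unfolding fibration_def by blast
lemma fun_p: "is_functor (tot F) (base F) (po F) (pa F)" using fib unfolding fibration_def by blast

lemma pa_arr: "h \<in> Arr (tot F) \<Longrightarrow> pa F h \<in> Arr (base F) \<and> Dom (base F) (pa F h) = po F (Dom (tot F) h)
   \<and> Cod (base F) (pa F h) = po F (Cod (tot F) h)"
  using fun_arr[OF fun_p] by blast

lemma fle_fib: "fle F X P Q \<Longrightarrow> P \<in> fibre F X \<and> Q \<in> fibre F X"
  unfolding fle_def by blast

lemma fibre_obj: "P \<in> fibre F X \<Longrightarrow> P \<in> Obj (tot F) \<and> po F P = X"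
  unfolding fibre_def by blast

lemma fle_refl: "P \<in> fibre F X \<Longrightarrow> fle F X P P"
proof -
  assume P: "P \<in> fibre F X"
  hence "P \<in> Obj (tot F)" "po F P = X" unfolding fibre_def by auto
  thus ?thesis using P cat_id[OF catE] fun_id[OF fun_p] unfolding fle_def by metis
qed

lemma fle_trans: "fle F X P Q \<Longrightarrow> fle F X Q R \<Longrightarrow> fle F X P R"
proof -
  assume a: "fle F X P Q" "fle F X Q R"
  then obtain h1 h2 where h: "h1 \<in> Arr (tot F)" "Dom (tot F) h1 = P" "Cod (tot F) h1 = Q" "pa F h1 = Idt (base F) X"
    "h2 \<in> Arr (tot F)" "Dom (tot F) h2 = Q" "Cod (tot F) h2 = R" "pa F h2 = Idt (base F) X"
    and f: "P \<in> fibre F X" "R \<in> fibre F X" "Q \<in> fibre F X" unfolding fle_def by blast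
  have X: "X \<in> Obj (base F)" using f(1) fibre_obj cat_dom[OF catB] pa_arr h(1,2) by metis
  have c: "Cmp (tot F) h2 h1 \<in> Arr (tot F) \<and> Dom (tot F) (Cmp (tot F) h2 h1) = P \<and> Cod (tot F) (Cmp (tot F) h2 h1) = R"
    using cat_comp[OF catE] h by metis
  have "pa F (Cmp (tot F) h2 h1) = Cmp (base F) (Idt (base F) X) (Idt (base F) X)"
    using fun_comp[OF fun_p] h by metis
  also have "\<dots> = Idt (base F) X" using cat_idl[OF catB] cat_id[OF catB X] by metis
  finally show ?thesis using c f unfolding fle_def by blast
qed

lemma fle_precomp: "fle F X P Q \<Longrightarrow> h \<in> Arr (tot F) \<Longrightarrow> Dom (tot F) h = Q \<Longrightarrow>
   \<exists>h2. h2 \<in> Arr (tot F) \<and> Dom (tot F) h2 = P \<and> Cod (tot F) h2 = Cod (tot F) h \<and> pa F h2 = pa F h"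
proof -
  assume a: "fle F X P Q" "h \<in> Arr (tot F)" "Dom (tot F) h = Q"
  then obtain v where v: "v \<in> Arr (tot F)" "Dom (tot F) v = P" "Cod (tot F) v = Q" "pa F v = Idt (base F) X"
    and f: "P \<in> fibre F X" "Q \<in> fibre F X" unfolding fle_def by blast
  have c: "Cmp (tot F) h v \<in> Arr (tot F) \<and> Dom (tot F) (Cmp (tot F) h v) = P \<and> Cod (tot F) (Cmp (tot F) h v) = Cod (tot F) h"
    using cat_comp[OF catE v(1) a(2)] v a(3) by simp
  have "pa F (Cmp (tot F) h v) = Cmp (base F) (pa F h) (pa F v)"
    using fun_comp[OF fun_p v(1) a(2)] v a(3) by simp
  also have "\<dots> = Cmp (base F) (pa F h) (Idt (base F) (Dom (base F) (pa F h)))"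
    using v(4) pa_arr[OF a(2)] a(3) fibre_obj[OF f(2)] by simp
  also have "\<dots> = pa F h" using cat_idr[OF catB] pa_arr[OF a(2)] by blast
  finally show ?thesis using c by blast
qed

lemma fle_antisym: "X \<in> Obj (base F) \<Longrightarrow> fle F X P Q \<Longrightarrow> fle F X Q P \<Longrightarrow> P = Q"
  using cl unfolding clat_fibres_def by blast

lemma fmeet_is: "X \<in> Obj (base F) \<Longrightarrow> S \<subseteq> fibre F X \<Longrightarrow> is_fmeet F X S (fmeet F X S)"
proof -
  assume X: "X \<in> Obj (base F)" and S: "S \<subseteq> fibre F X"
  then obtain m where m: "is_fmeet F X S m" using cl unfolding clat_fibres_def by blast
  have "\<And>m'. is_fmeet F X S m' \<Longrightarrow> m' = m"
    using m fle_antisym[OF X] unfolding is_fmeet_def by blast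
  thus ?thesis unfolding fmeet_def using m by (metis theI)
qed

lemma fmeet_fibre: "X \<in> Obj (base F) \<Longrightarrow> S \<subseteq> fibre F X \<Longrightarrow> fmeet F X S \<in> fibre F X"
  using fmeet_is unfolding is_fmeet_def by blast
lemma fmeet_lb: "X \<in> Obj (base F) \<Longrightarrow> S \<subseteq> fibre F X \<Longrightarrow> Q \<in> S \<Longrightarrow> fle F X (fmeet F X S) Q"
  using fmeet_is unfolding is_fmeet_def by blast
lemma fmeet_glb: "X \<in> Obj (base F) \<Longrightarrow> S \<subseteq> fibre F X \<Longrightarrow> m \<in> fibre F X \<Longrightarrow> (\<And>Q. Q \<in> S \<Longrightarrow> fle F X m Q) \<Longrightarrow> fle F X m (fmeet F X S)"
  using fmeet_is unfolding is_fmeet_def by blast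

lemma cart_dom_fibre: "cartesian F c \<Longrightarrow> Dom (tot F) c \<in> fibre F (Dom (base F) (pa F c))"
  unfolding fibre_def cartesian_def using pa_arr cat_dom[OF catE] by auto

lemma cart_lift: "cartesian F c \<Longrightarrow> g \<in> Arr (tot F) \<Longrightarrow> u \<in> Arr (base F) \<Longrightarrow> Cod (tot F) g = Cod (tot F) c
  \<Longrightarrow> Cod (base F) u = Dom (base F) (pa F c) \<Longrightarrow> Dom (base F) u = Dom (base F) (pa F g) \<Longrightarrow> pa F g = Cmp (base F) (pa F c) u
  \<Longrightarrow> \<exists>h. h \<in> Arr (tot F) \<and> Dom (tot F) h = Dom (tot F) g \<and> Cod (tot F) h = Dom (tot F) c \<and> pa F h = u"
  unfolding cartesian_def by blast

lemma cart_vert: "cartesian F c1 \<Longrightarrow> cartesian F c2 \<Longrightarrow> Cod (tot F) c1 = Cod (tot F) c2 \<Longrightarrow> pa F c1 = u \<Longrightarrow> pa F c2 = u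
   \<Longrightarrow> fle F (Dom (base F) u) (Dom (tot F) c1) (Dom (tot F) c2)"
proof -
  assume c: "cartesian F c1" "cartesian F c2" "Cod (tot F) c1 = Cod (tot F) c2" "pa F c1 = u" "pa F c2 = u"
  have c1: "c1 \<in> Arr (tot F)" using c(1) unfolding cartesian_def by blast
  hence u: "u \<in> Arr (base F)" using pa_arr c by blast
  have D: "Dom (base F) u \<in> Obj (base F)" using cat_dom[OF catB u] .
  have I: "Idt (base F) (Dom (base F) u) \<in> Arr (base F) \<and> Dom (base F) (Idt (base F) (Dom (base F) u)) = Dom (base F) u
     \<and> Cod (base F) (Idt (base F) (Dom (base F) u)) = Dom (base F) u" using cat_id[OF catB D] .
  have e: "pa F c1 = Cmp (base F) (pa F c2) (Idt (base F) (Dom (base F) u))" using cat_idr[OF catB u] c by simp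
  have "\<exists>h. h \<in> Arr (tot F) \<and> Dom (tot F) h = Dom (tot F) c1 \<and> Cod (tot F) h = Dom (tot F) c2 \<and>
                  pa F h = Idt (base F) (Dom (base F) u)"
    apply (rule cart_lift[OF c(2) c1]) using I e c by auto
  then obtain h where "h \<in> Arr (tot F)" "Dom (tot F) h = Dom (tot F) c1" "Cod (tot F) h = Dom (tot F) c2"
     "pa F h = Idt (base F) (Dom (base F) u)" by blast
  thus ?thesis unfolding fle_def using cart_dom_fibre c by metis
qed

lemma reindex_cart: "u \<in> Arr (base F) \<Longrightarrow> Q \<in> Obj (tot F) \<Longrightarrow> Cod (base F) u = po F Q \<Longrightarrow>
   \<exists>c. cartesian F c \<and> Cod (tot F) c = Q \<and> pa F c = u \<and> Dom (tot F) c = reindex F u Q"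
proof -
  assume a: "u \<in> Arr (base F)" "Q \<in> Obj (tot F)" "Cod (base F) u = po F Q"
  then obtain c where c: "cartesian F c" "Cod (tot F) c = Q" "pa F c = u" using fib unfolding fibration_def by blast
  have D: "Dom (base F) u \<in> Obj (base F)" using cat_dom[OF catB a(1)] .
  have "\<And>P. (\<exists>c'. cartesian F c' \<and> Cod (tot F) c' = Q \<and> pa F c' = u \<and> Dom (tot F) c' = P) \<Longrightarrow> P = Dom (tot F) c"
    using cart_vert c fle_antisym[OF D] by metis
  hence "reindex F u Q = Dom (tot F) c" unfolding reindex_def using c by (intro the_equality) blast+
  thus ?thesis using c by (intro exI[of _ c]) simp
qed

lemma reindex_fibre: "u \<in> Arr (base F) \<Longrightarrow> Q \<in> fibre F (Cod (base F) u) \<Longrightarrow> reindex F u Q \<in> fibre F (Dom (base F) u)"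
  using reindex_cart cart_dom_fibre fibre_obj by metis

lemma reindex_mono: "u \<in> Arr (base F) \<Longrightarrow> fle F (Cod (base F) u) P Q \<Longrightarrow> fle F (Dom (base F) u) (reindex F u P) (reindex F u Q)"
proof -
  assume u: "u \<in> Arr (base F)" and le: "fle F (Cod (base F) u) P Q"
  let ?Y = "Cod (base F) u"
  have Y: "?Y \<in> Obj (base F)" using cat_cod[OF catB u] .
  have f: "P \<in> fibre F ?Y" "Q \<in> fibre F ?Y" using fle_fib[OF le] by auto
  have s: "{P, Q} \<subseteq> fibre F ?Y" using f by auto
  have "fmeet F ?Y {P,Q} = P"
    using fle_antisym[OF Y] fmeet_lb[OF Y s] fmeet_glb[OF Y s] f le fle_refl by blast
  hence "reindex F u P = fmeet F (Dom (base F) u) (reindex F u ` {P,Q})"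
    using mp u s unfolding meet_preserving_reindex_def by metis
  moreover have "reindex F u ` {P,Q} \<subseteq> fibre F (Dom (base F) u)" using reindex_fibre u f by auto
  ultimately show ?thesis using fmeet_lb cat_dom[OF catB u] by (metis imageI insertI1 insertI2)
qed

lemma reindex_comp_le:
  assumes g: "g \<in> Arr (base F)" and x: "x \<in> Arr (base F)" and gx: "Cod (base F) x = Dom (base F) g"
    and Q: "Q \<in> Obj (tot F)" and gQ: "Cod (base F) g = po F Q"
  shows "fle F (Dom (base F) x) (reindex F (Cmp (base F) g x) Q) (reindex F x (reindex F g Q))"
proof -
  have cgx: "Cmp (base F) g x \<in> Arr (base F) \<and> Dom (base F) (Cmp (base F) g x) = Dom (base F) x \<and> Cod (base F) (Cmp (base F) g x) = Cod (base F) g"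
    using cat_comp[OF catB x g gx] .
  obtain d where d: "cartesian F d" "Cod (tot F) d = Q" "pa F d = Cmp (base F) g x" "Dom (tot F) d = reindex F (Cmp (base F) g x) Q"
    using reindex_cart[of "Cmp (base F) g x" Q] cgx Q gQ by auto
  obtain c1 where c1: "cartesian F c1" "Cod (tot F) c1 = Q" "pa F c1 = g" "Dom (tot F) c1 = reindex F g Q"
    using reindex_cart[OF g Q gQ] by auto
  have dA: "d \<in> Arr (tot F)" using d(1) unfolding cartesian_def by blast
  have "\<exists>h. h \<in> Arr (tot F) \<and> Dom (tot F) h = Dom (tot F) d \<and> Cod (tot F) h = Dom (tot F) c1 \<and> pa F h = x"
    apply (rule cart_lift[OF c1(1) dA x])
    using d(2,3) c1(2,3) gx cgx by simp_all
  then obtain h where h: "h \<in> Arr (tot F)" "Dom (tot F) h = Dom (tot F) d" "Cod (tot F) h = Dom (tot F) c1" "pa F h = x" by blast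
  have rg: "reindex F g Q \<in> fibre F (Dom (base F) g)" using reindex_fibre[OF g] Q gQ unfolding fibre_def by auto
  have rg2: "reindex F g Q \<in> Obj (tot F)" "Cod (base F) x = po F (reindex F g Q)" using fibre_obj[OF rg] gx by auto
  obtain c2 where c2: "cartesian F c2" "Cod (tot F) c2 = reindex F g Q" "pa F c2 = x" "Dom (tot F) c2 = reindex F x (reindex F g Q)"
    using reindex_cart[OF x rg2] by auto
  have D: "Dom (base F) x \<in> Obj (base F)" using cat_dom[OF catB x] .
  have I: "Idt (base F) (Dom (base F) x) \<in> Arr (base F) \<and> Dom (base F) (Idt (base F) (Dom (base F) x)) = Dom (base F) x
     \<and> Cod (base F) (Idt (base F) (Dom (base F) x)) = Dom (base F) x" using cat_id[OF catB D] .
  have e: "pa F h = Cmp (base F) (pa F c2) (Idt (base F) (Dom (base F) x))" using cat_idr[OF catB x] h c2 by simp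
  have "\<exists>h'. h' \<in> Arr (tot F) \<and> Dom (tot F) h' = Dom (tot F) h \<and> Cod (tot F) h' = Dom (tot F) c2 \<and>
     pa F h' = Idt (base F) (Dom (base F) x)"
  proof -
    have p1: "Cod (tot F) h = Cod (tot F) c2" using h(3) c1(4) c2(2) by simp
    have p2: "Cod (base F) (Idt (base F) (Dom (base F) x)) = Dom (base F) (pa F c2)" using I c2(3) by simp
    have p3: "Dom (base F) (Idt (base F) (Dom (base F) x)) = Dom (base F) (pa F h)" using I h(4) by simp
    show ?thesis by (rule cart_lift[OF c2(1) h(1) conjunct1[OF I] p1 p2 p3 e])
  qed
  then obtain h' where h'0: "h' \<in> Arr (tot F)" "Dom (tot F) h' = Dom (tot F) h" "Cod (tot F) h' = Dom (tot F) c2"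
     "pa F h' = Idt (base F) (Dom (base F) x)" by blast
  have h': "h' \<in> Arr (tot F)" "Dom (tot F) h' = Dom (tot F) d" "Cod (tot F) h' = Dom (tot F) c2"
     "pa F h' = Idt (base F) (Dom (base F) x)" using h'0 h(2) by simp_all
  have f1: "Dom (tot F) d \<in> fibre F (Dom (base F) x)" using cart_dom_fibre[OF d(1)] d(3) cgx by metis
  have f2: "Dom (tot F) c2 \<in> fibre F (Dom (base F) x)" using cart_dom_fibre[OF c2(1)] c2(3) by metis
  have "fle F (Dom (base F) x) (Dom (tot F) d) (Dom (tot F) c2)"
    unfolding fle_def using f1 f2 h'(1-4) by blast
  thus ?thesis using d(4) c2(4) by simp
qed

end

theorem mainTheorem3:
  fixes S :: "('o,'a,'eo,'ea,'s,'l) situation" and X :: 'o and x :: 'a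
  assumes "expressivity_situation S"
    and "x \<in> hom (base (fb S)) X (Bo S X)"
    and "Phi S x (fmeet (fb S) X {(Phi S x ^^ i) (ftop (fb S) X) | i. True})
           = fmeet (fb S) X {(Phi S x ^^ i) (ftop (fb S) X) | i. True}"
    and "\<forall>i::nat. approximating S X {sem S x \<phi> | \<phi>. wf_form S \<phi> \<and> depth \<phi> \<le> i}"
  shows "fle (fb S) X (fmeet (fb S) X {reindex (fb S) (sem S x \<phi>) (Omu S) | \<phi>. wf_form S \<phi>})
           (codensity_bisim S X x)"
proof -
  let ?F = "fb S"
  let ?C = "base (fb S)"
  let ?E = "tot (fb S)"
  have ES: "expressivity_situation S" by fact
  interpret fib "fb S" using ES unfolding expressivity_situation_def fib_def by blast
  have funB: "is_functor ?C ?C (Bo S) (Ba S)" using ES unfolding expressivity_situation_def by blast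
  have Om: "Om S \<in> Obj ?C" "Omu S \<in> Obj ?E" "po ?F (Omu S) = Om S"
    using ES unfolding expressivity_situation_def by blast+
  have OmuF: "Omu S \<in> fibre ?F (Om S)" using Om unfolding fibre_def by blast
  have tau: "\<And>l. l \<in> Lam S \<Longrightarrow> tau S l \<in> Arr ?C \<and> Dom ?C (tau S l) = Bo S (Om S) \<and> Cod ?C (tau S l) = Om S"
    using ES unfolding expressivity_situation_def hom_def by blast
  have xA: "x \<in> Arr ?C" "Dom ?C x = X" "Cod ?C x = Bo S X" using assms(2) unfolding hom_def by blast+
  have XO: "X \<in> Obj ?C" using cat_dom[OF catB xA(1)] xA(2) by simp
  have BXO: "Bo S X \<in> Obj ?C" using cat_cod[OF catB xA(1)] xA(3) by simp

  have rfib: "\<And>u A. u \<in> Arr ?C \<Longrightarrow> Dom ?C u = A \<Longrightarrow> Cod ?C u = Om S \<Longrightarrow> reindex ?F u (Omu S) \<in> fibre ?F A"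
    using reindex_fibre OmuF by metis
  have tBk: "\<And>k l. k \<in> Arr ?C \<Longrightarrow> Dom ?C k = X \<Longrightarrow> Cod ?C k = Om S \<Longrightarrow> l \<in> Lam S \<Longrightarrow>
      Cmp ?C (tau S l) (Ba S k) \<in> Arr ?C \<and> Dom ?C (Cmp ?C (tau S l) (Ba S k)) = Bo S X \<and> Cod ?C (Cmp ?C (tau S l) (Ba S k)) = Om S"
  proof -
    fix k l assume k: "k \<in> Arr ?C" "Dom ?C k = X" "Cod ?C k = Om S" and l: "l \<in> Lam S"
    have Bk: "Ba S k \<in> Arr ?C" "Dom ?C (Ba S k) = Bo S X" "Cod ?C (Ba S k) = Bo S (Om S)"
      using fun_arr[OF funB k(1)] k by auto
    show "Cmp ?C (tau S l) (Ba S k) \<in> Arr ?C \<and> Dom ?C (Cmp ?C (tau S l) (Ba S k)) = Bo S X \<and> Cod ?C (Cmp ?C (tau S l) (Ba S k)) = Om S"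
      using cat_comp[OF catB Bk(1), of "tau S l"] tau[OF l] Bk by simp
  qed

  define CG where "CG P = {reindex ?F (Cmp ?C (tau S l) (Ba S (pa ?F h))) (Omu S) | l h.
        l \<in> Lam S \<and> h \<in> Arr ?E \<and> Dom ?E h = P \<and> Cod ?E h = Omu S}" for P
  have CL: "\<And>P. P \<in> fibre ?F X \<Longrightarrow> codensity_lifting S P = fmeet ?F (Bo S X) (CG P)"
    unfolding codensity_lifting_def CG_def fibre_def by auto
  have CGf: "\<And>P. P \<in> fibre ?F X \<Longrightarrow> CG P \<subseteq> fibre ?F (Bo S X)"
  proof
    fix P R assume P: "P \<in> fibre ?F X" and R: "R \<in> CG P"
    then obtain l h where lh: "R = reindex ?F (Cmp ?C (tau S l) (Ba S (pa ?F h))) (Omu S)" "l \<in> Lam S"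
      "h \<in> Arr ?E" "Dom ?E h = P" "Cod ?E h = Omu S" unfolding CG_def by blast
    have "pa ?F h \<in> Arr ?C" "Dom ?C (pa ?F h) = X" "Cod ?C (pa ?F h) = Om S"
      using pa_arr[OF lh(3)] lh(4,5) fibre_obj[OF P] Om(3) by auto
    from tBk[OF this lh(2)] show "R \<in> fibre ?F (Bo S X)" using rfib lh(1) by blast
  qed
  have CLf: "\<And>P. P \<in> fibre ?F X \<Longrightarrow> codensity_lifting S P \<in> fibre ?F (Bo S X)"
    using CL CGf fmeet_fibre[OF BXO] by metis
  have Phif: "\<And>P. P \<in> fibre ?F X \<Longrightarrow> Phi S x P \<in> fibre ?F X"
    unfolding Phi_def using reindex_fibre[OF xA(1)] xA CLf by metis
  have Phim: "\<And>P Q. fle ?F X P Q \<Longrightarrow> fle ?F X (Phi S x P) (Phi S x Q)"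
  proof -
    fix P Q assume le: "fle ?F X P Q"
    have f: "P \<in> fibre ?F X" "Q \<in> fibre ?F X" using fle_fib[OF le] by auto
    have "fle ?F (Bo S X) (fmeet ?F (Bo S X) (CG P)) (fmeet ?F (Bo S X) (CG Q))"
    proof (rule fmeet_glb[OF BXO CGf[OF f(2)]])
      show "fmeet ?F (Bo S X) (CG P) \<in> fibre ?F (Bo S X)" using fmeet_fibre[OF BXO CGf[OF f(1)]] .
      fix R assume "R \<in> CG Q"
      then obtain l h where lh: "R = reindex ?F (Cmp ?C (tau S l) (Ba S (pa ?F h))) (Omu S)" "l \<in> Lam S"
        "h \<in> Arr ?E" "Dom ?E h = Q" "Cod ?E h = Omu S" unfolding CG_def by blast
      obtain h2 where h2: "h2 \<in> Arr ?E" "Dom ?E h2 = P" "Cod ?E h2 = Cod ?E h" "pa ?F h2 = pa ?F h"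
        using fle_precomp[OF le lh(3,4)] by blast
      have "R \<in> CG P" unfolding CG_def
        by (rule CollectI, rule exI[of _ l], rule exI[of _ h2]) (simp add: h2 lh)
      thus "fle ?F (Bo S X) (fmeet ?F (Bo S X) (CG P)) R" using fmeet_lb[OF BXO CGf[OF f(1)]] by blast
    qed
    hence "fle ?F (Cod ?C x) (codensity_lifting S P) (codensity_lifting S Q)" using CL f xA by simp
    from reindex_mono[OF xA(1) this] show "fle ?F X (Phi S x P) (Phi S x Q)" unfolding Phi_def using xA by simp
  qed

  define T where "T i = (Phi S x ^^ i) (ftop ?F X)" for i
  have topf: "ftop ?F X \<in> fibre ?F X" unfolding ftop_def using fmeet_fibre[OF XO] by blast
  have Tf: "\<And>i. T i \<in> fibre ?F X"
  proof -
    fix i show "T i \<in> fibre ?F X" by (induction i) (auto simp: T_def topf Phif)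
  qed
  have TSuc: "\<And>i. T (Suc i) = Phi S x (T i)" unfolding T_def by simp
  define Tw where "Tw = fmeet ?F X {T i | i. True}"
  have Tset: "{T i | i. True} = {(Phi S x ^^ i) (ftop (fb S) X) | i. True}" unfolding T_def by simp
  have TwS: "{T i | i. True} \<subseteq> fibre ?F X" using Tf by blast
  have Twf: "Tw \<in> fibre ?F X" unfolding Tw_def using fmeet_fibre[OF XO TwS] .
  have Twfix: "Phi S x Tw = Tw" unfolding Tw_def Tset using assms(3) .
  have fixle: "\<And>Q. Q \<in> fibre ?F X \<Longrightarrow> Phi S x Q = Q \<Longrightarrow> fle ?F X Q Tw"
  proof -
    fix Q assume Q: "Q \<in> fibre ?F X" "Phi S x Q = Q"
    have "\<And>i. fle ?F X Q (T i)"
    proof -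
      fix i show "fle ?F X Q (T i)"
      proof (induction i)
        case 0 show ?case unfolding T_def ftop_def using fmeet_glb[OF XO, of "{}" Q] Q by simp
      next
        case (Suc i) show ?case using Phim[OF Suc] Q(2) TSuc by simp
      qed
    qed
    thus "fle ?F X Q Tw" unfolding Tw_def using fmeet_glb[OF XO TwS Q(1)] by blast
  qed
  have bis: "codensity_bisim S X x = Tw"
    unfolding codensity_bisim_def
  proof (rule the_equality)
    show "Tw \<in> fibre ?F X \<and> Phi S x Tw = Tw \<and> (\<forall>Q\<in>fibre ?F X. Phi S x Q = Q \<longrightarrow> fle ?F X Q Tw)"
      using Twf Twfix fixle by blast
    fix P assume P: "P \<in> fibre ?F X \<and> Phi S x P = P \<and> (\<forall>Q\<in>fibre ?F X. Phi S x Q = Q \<longrightarrow> fle ?F X Q P)"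
    have "fle ?F X P Tw" using fixle P by blast
    moreover have "fle ?F X Tw P" using P Twf Twfix by blast
    ultimately show "P = Tw" using fle_antisym[OF XO] by blast
  qed
  define K where "K i = {sem S x \<phi> | \<phi>. wf_form S \<phi> \<and> depth \<phi> \<le> i}" for i
  have appr: "\<And>i. approximating S X (K i)" using assms(4) unfolding K_def by blast
  have Khom: "\<And>i k. k \<in> K i \<Longrightarrow> k \<in> Arr ?C \<and> Dom ?C k = X \<and> Cod ?C k = Om S"
    using appr unfolding approximating_def hom_def by blast
  define MG where "MG i = (\<lambda>k. reindex ?F k (Omu S)) ` K i" for i
  define M where "M i = fmeet ?F X (MG i)" for i
  have MGf: "\<And>i. MG i \<subseteq> fibre ?F X" unfolding MG_def using Khom rfib by blast
  have Mf: "\<And>i. M i \<in> fibre ?F X" unfolding M_def using fmeet_fibre[OF XO MGf] .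
  define G where "G i = {reindex ?F (Cmp ?C (tau S l') (Ba S k')) (Omu S) | k' l'. k' \<in> K i \<and> l' \<in> Lam S}" for i
  define N where "N i = fmeet ?F (Bo S X) (G i)" for i
  have Gf: "\<And>i. G i \<subseteq> fibre ?F (Bo S X)"
  proof
    fix i R assume "R \<in> G i"
    then obtain k l where kl: "R = reindex ?F (Cmp ?C (tau S l) (Ba S k)) (Omu S)" "k \<in> K i" "l \<in> Lam S"
      unfolding G_def by blast
    from tBk[OF _ _ _ kl(3)] Khom[OF kl(2)] show "R \<in> fibre ?F (Bo S X)" using rfib kl(1) by blast
  qed
  have Nf: "\<And>i. N i \<in> fibre ?F (Bo S X)" unfolding N_def using fmeet_fibre[OF BXO Gf] .
  have apprN: "\<And>i h l. h \<in> Arr ?E \<Longrightarrow> Dom ?E h = M i \<Longrightarrow> Cod ?E h = Omu S \<Longrightarrow> l \<in> Lam S \<Longrightarrow>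
     fle ?F (Bo S X) (N i) (reindex ?F (Cmp ?C (tau S l) (Ba S (pa ?F h))) (Omu S))"
  proof -
    fix i h l assume h: "h \<in> Arr ?E" "Dom ?E h = M i" "Cod ?E h = Omu S" and l: "l \<in> Lam S"
    have "Dom ?E h = fmeet ?F X ((\<lambda>k. reindex ?F k (Omu S)) ` K i)" using h(2) unfolding M_def MG_def .
    with appr[of i] h l show "fle ?F (Bo S X) (N i) (reindex ?F (Cmp ?C (tau S l) (Ba S (pa ?F h))) (Omu S))"
      unfolding approximating_def N_def G_def by blast
  qed
  have MT: "\<And>i. fle ?F X (M i) (T i)"
  proof -
    fix i show "fle ?F X (M i) (T i)"
    proof (induction i)
      case 0 show ?case unfolding T_def ftop_def using fmeet_glb[OF XO, of "{}" "M 0"] Mf by simp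
    next
      case (Suc i)
      have NC: "fle ?F (Bo S X) (N i) (codensity_lifting S (T i))"
        unfolding CL[OF Tf]
      proof (rule fmeet_glb[OF BXO CGf[OF Tf] Nf])
        fix R assume "R \<in> CG (T i)"
        then obtain l h where lh: "R = reindex ?F (Cmp ?C (tau S l) (Ba S (pa ?F h))) (Omu S)" "l \<in> Lam S"
          "h \<in> Arr ?E" "Dom ?E h = T i" "Cod ?E h = Omu S" unfolding CG_def by blast
        obtain h2 where h2: "h2 \<in> Arr ?E" "Dom ?E h2 = M i" "Cod ?E h2 = Cod ?E h" "pa ?F h2 = pa ?F h"
          using fle_precomp[OF Suc lh(3,4)] by blast
        show "fle ?F (Bo S X) (N i) R" using apprN[OF h2(1,2) _ lh(2)] h2(3,4) lh(1,5) by simp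
      qed
      have "fle ?F X (reindex ?F x (N i)) (T (Suc i))"
        using reindex_mono[OF xA(1)] NC xA TSuc unfolding Phi_def by simp
      moreover have "reindex ?F x (N i) = fmeet ?F X (reindex ?F x ` G i)"
        using mp xA Gf unfolding meet_preserving_reindex_def N_def by metis
      moreover have "fle ?F X (M (Suc i)) (fmeet ?F X (reindex ?F x ` G i))"
      proof (rule fmeet_glb[OF XO])
        show "reindex ?F x ` G i \<subseteq> fibre ?F X" using reindex_fibre[OF xA(1)] Gf xA by auto
        show "M (Suc i) \<in> fibre ?F X" by (rule Mf)
        fix R assume "R \<in> reindex ?F x ` G i"
        then obtain \<phi> l where pl: "R = reindex ?F x (reindex ?F (Cmp ?C (tau S l) (Ba S (sem S x \<phi>))) (Omu S))"
           "wf_form S \<phi>" "depth \<phi> \<le> i" "l \<in> Lam S"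
          unfolding G_def K_def by blast
        have k: "sem S x \<phi> \<in> Arr ?C \<and> Dom ?C (sem S x \<phi>) = X \<and> Cod ?C (sem S x \<phi>) = Om S"
          using Khom[of "sem S x \<phi>" i] pl(2,3) unfolding K_def by blast
        have Bk: "Ba S (sem S x \<phi>) \<in> Arr ?C" "Dom ?C (Ba S (sem S x \<phi>)) = Bo S X" "Cod ?C (Ba S (sem S x \<phi>)) = Bo S (Om S)"
          using fun_arr[OF funB, of "sem S x \<phi>"] k by auto
        have tl: "tau S l \<in> Arr ?C" "Dom ?C (tau S l) = Bo S (Om S)" "Cod ?C (tau S l) = Om S" using tau[OF pl(4)] by auto
        have g: "Cmp ?C (tau S l) (Ba S (sem S x \<phi>)) \<in> Arr ?C \<and> Dom ?C (Cmp ?C (tau S l) (Ba S (sem S x \<phi>))) = Bo S X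
            \<and> Cod ?C (Cmp ?C (tau S l) (Ba S (sem S x \<phi>))) = Om S" using tBk k pl(4) by blast
        have sm: "sem S x (Mod l \<phi>) = Cmp ?C (Cmp ?C (tau S l) (Ba S (sem S x \<phi>))) x"
          using cat_assoc[OF catB xA(1) Bk(1) tl(1)] xA Bk tl by simp
        have "sem S x (Mod l \<phi>) \<in> K (Suc i)" unfolding K_def using pl by (intro CollectI exI[of _ "Mod l \<phi>"]) simp
        hence "reindex ?F (sem S x (Mod l \<phi>)) (Omu S) \<in> MG (Suc i)" unfolding MG_def by blast
        hence 1: "fle ?F X (M (Suc i)) (reindex ?F (sem S x (Mod l \<phi>)) (Omu S))"
          unfolding M_def using fmeet_lb[OF XO MGf] by blast
        have 2: "fle ?F X (reindex ?F (sem S x (Mod l \<phi>)) (Omu S)) R"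
          using reindex_comp_le[of _ x "Omu S"] g xA Om pl(1) sm by simp
        show "fle ?F X (M (Suc i)) R" using fle_trans[OF 1 2] .
      qed
      ultimately show ?case using fle_trans by metis
    qed
  qed
  define AG where "AG = {reindex ?F (sem S x \<phi>) (Omu S) | \<phi>. wf_form S \<phi>}"
  have AGf: "AG \<subseteq> fibre ?F X"
  proof
    fix R assume "R \<in> AG"
    then obtain \<phi> where p: "R = reindex ?F (sem S x \<phi>) (Omu S)" "wf_form S \<phi>" unfolding AG_def by blast
    have "sem S x \<phi> \<in> K (depth \<phi>)" unfolding K_def using p(2) by blast
    thus "R \<in> fibre ?F X" using Khom rfib p(1) by blast
  qed
  have AM: "\<And>i. fle ?F X (fmeet ?F X AG) (M i)"
    unfolding M_def
  proof (rule fmeet_glb[OF XO MGf fmeet_fibre[OF XO AGf]])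
    fix i R assume "R \<in> MG i"
    hence "R \<in> AG" unfolding MG_def K_def AG_def by blast
    thus "fle ?F X (fmeet ?F X AG) R" using fmeet_lb[OF XO AGf] by blast
  qed
  have "fle ?F X (fmeet ?F X AG) Tw"
    unfolding Tw_def
  proof (rule fmeet_glb[OF XO TwS fmeet_fibre[OF XO AGf]])
    fix R assume "R \<in> {T i | i. True}"
    then obtain i where "R = T i" by blast
    thus "fle ?F X (fmeet ?F X AG) R" using fle_trans[OF AM MT] by blast
  qed
  thus ?thesis unfolding bis AG_def .
qed
end
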